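(* Let $q=p^m$ with $p$ an odd prime, $q\equiv 1\pmod 3$, $q\geq 13$. The connected components of $C_P(q)$ are exactly: (1) the $q(q-1)$ isolated vertices, which are the maps $\pi(x)=ax+b$ with $a\neq 0$ (equivalently $\pi(\infty)=\infty$); and (2) the $q-1$ induced subgraphs $[P_r]$, $r\in GF(q)\setminus\{0\}$, each of which is connected.
   Context: $PGL(2,q)$ is the group of maps $x\mapsto\frac{ax+b}{cx+d}$ ($a,b,c,d\in GF(q)$, $ad\neq bc$) acting on $GF(q)\cup\{\infty\}$ with the usual conventions ($-d/c\mapsto\infty$, $\infty\mapsto a/c$ if $c\neq0$, $\infty\mapsto\infty$ if $c=0$). For $K,i\in GF(q)$ and $r\in GF(q)\setminus\{0\}$, $f_{K,r,i}$ is the element of $PGL(2,q)$ with $f_{K,r,i}(x)=K+\frac{r}{x-i}$ for $x\notin\{i,\infty\}$, $f_{K,r,i}(\infty)=K$, $f_{K,r,i}(i)=\infty$. For $r\neq0$, $P_r=\{f_{a,r,i}: a,i\in GF(q)\}$. $hd(\pi,\sigma)$ is the number of points at which $\pi,\sigma$ differ. With distinguished element $F=\infty$, $\pi^{\triangle}$ is the permutation with $\pi^{\triangle}(\pi^{-1}(\infty))=\pi(\infty)$, $\pi^{\triangle}(\infty)=\infty$, $\pi^{\triangle}(x)=\pi(x)$ otherwise. The contraction graph $C_P(q)$ has vertex set $PGL(2,q)$, with distinct $\pi,\sigma$ adjacent iff $hd(\pi^{\triangle},\sigma^{\triangle})=q-4$. $[S]$ denotes the induced subgraph on $S$. *)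

theory Defs
  imports "HOL-Computational_Algebra.Primes" "HOL-Library.Cardinality"
begin

text \<open>The projective line GF(q) \<union> {\<infinity>} is modelled as 'a option, with None = \<infinity>.\<close>

definition mobius :: "'a::field \<Rightarrow> 'a \<Rightarrow> 'a \<Rightarrow> 'a \<Rightarrow> 'a option \<Rightarrow> 'a option" where
  "mobius a b c d x = (case x of
      None \<Rightarrow> (if c = 0 then None else Some (a / c))
    | Some y \<Rightarrow> (if c * y + d = 0 then None else Some ((a * y + b) / (c * y + d))))"

definition PGL2 :: "('a::field option \<Rightarrow> 'a option) set" where
  "PGL2 = {mobius a b c d | a b c d. a * d \<noteq> b * c}"

definition fKri :: "'a::field \<Rightarrow> 'a \<Rightarrow> 'a \<Rightarrow> 'a option \<Rightarrow> 'a option" where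
  "fKri K r i x = (case x of
      None \<Rightarrow> Some K
    | Some y \<Rightarrow> (if y = i then None else Some (K + r / (y - i))))"

definition Pset :: "'a::field \<Rightarrow> ('a option \<Rightarrow> 'a option) set" where
  "Pset r = {fKri a r i | a i. True}"

definition hd :: "('b \<Rightarrow> 'c) \<Rightarrow> ('b \<Rightarrow> 'c) \<Rightarrow> nat" where
  "hd \<pi> \<sigma> = card {x. \<pi> x \<noteq> \<sigma> x}"

text \<open>Contraction with distinguished element F = \<infinity> (None).\<close>
definition tri :: "('a option \<Rightarrow> 'a option) \<Rightarrow> 'a option \<Rightarrow> 'a option" where
  "tri \<pi> x = (if x = None then None else if \<pi> x = None then \<pi> None else \<pi> x)"

definition adjC :: "('a::{finite,field} option \<Rightarrow> 'a option) \<Rightarrow> ('a option \<Rightarrow> 'a option) \<Rightarrow> bool" where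
  "adjC \<pi> \<sigma> \<longleftrightarrow> \<pi> \<in> PGL2 \<and> \<sigma> \<in> PGL2 \<and> \<pi> \<noteq> \<sigma> \<and>
     hd (tri \<pi>) (tri \<sigma>) = card (UNIV :: 'a set) - 4"

definition induced_edges :: "('v \<Rightarrow> 'v \<Rightarrow> bool) \<Rightarrow> 'v set \<Rightarrow> ('v \<times> 'v) set" where
  "induced_edges E S = {(u, v). u \<in> S \<and> v \<in> S \<and> E u v}"

definition connected_graph :: "('v \<Rightarrow> 'v \<Rightarrow> bool) \<Rightarrow> 'v set \<Rightarrow> bool" where
  "connected_graph E S \<longleftrightarrow> S \<noteq> {} \<and> (\<forall>u\<in>S. \<forall>v\<in>S. (u, v) \<in> (induced_edges E S)\<^sup>*)"

definition components :: "('v \<Rightarrow> 'v \<Rightarrow> bool) \<Rightarrow> 'v set \<Rightarrow> 'v set set" where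
  "components E V = {{w \<in> V. (v, w) \<in> (induced_edges E V)\<^sup>*} | v. v \<in> V}"

definition affine_maps :: "('a::field option \<Rightarrow> 'a option) set" where
  "affine_maps = {mobius a b 0 1 | a b. a \<noteq> 0}"

end

theory Submission
  imports Defs "HOL-Computational_Algebra.Polynomial"
begin

lemma char_card: "of_nat CARD('a) = (0::'a::{finite,field})"
proof -
  have b: "bij (\<lambda>x::'a. x + 1)" by (rule bijI') (auto intro: exI[of _ "_ - 1"])
  have "(\<Sum>x\<in>UNIV. x + 1) = (\<Sum>x\<in>UNIV. (x::'a))"
    using sum.reindex_bij_betw[OF b, of "\<lambda>x. x"] by simp
  moreover have "(\<Sum>x\<in>UNIV. x + 1) = (\<Sum>x\<in>UNIV. (x::'a)) + of_nat CARD('a)"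
    by (simp add: sum.distrib)
  ultimately show ?thesis by simp
qed

lemma two_ne0: assumes "odd CARD('a)" shows "(2::'a::{finite,field}) \<noteq> 0"
proof
  assume h: "(2::'a) = 0"
  obtain k where k: "CARD('a) = 2*k+1" using assms oddE by blast
  have "(of_nat CARD('a)::'a) = 2 * of_nat k + 1" by (simp add: k)
  then show False using char_card[where 'a='a] h by simp
qed

lemma three_ne0: assumes "CARD('a) mod 3 = 1" shows "(3::'a::{finite,field}) \<noteq> 0"
proof
  assume h: "(3::'a) = 0"
  obtain k where k: "CARD('a) = 3*k+1" using assms by (metis mod_div_mult_eq add.commute mult.commute)
  have "(of_nat CARD('a)::'a) = 3 * of_nat k + 1" by (simp add: k)
  then show False using char_card[where 'a='a] h by simp
qed

lemma fermat: assumes "(a::'a::{finite,field}) \<noteq> 0" shows "a ^ (CARD('a) - 1) = 1"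
proof -
  let ?U = "UNIV - {0::'a}"
  have b: "bij_betw (\<lambda>x. a*x) ?U ?U"
    by (rule bij_betw_byWitness[where f'="\<lambda>x. x/a"]) (use assms in auto)
  have "(\<Prod>x\<in>?U. a*x) = (\<Prod>x\<in>?U. x)"
    using prod.reindex_bij_betw[OF b, of "\<lambda>x. x"] by simp
  moreover have "(\<Prod>x\<in>?U. a*x) = a ^ card ?U * (\<Prod>x\<in>?U. x)"
    by (simp add: prod.distrib)
  moreover have "(\<Prod>x\<in>?U. x) \<noteq> 0" by simp
  moreover have "card ?U = CARD('a) - 1" by (simp add: card_Diff_subset)
  ultimately show ?thesis by simp
qed

lemma omega_ex:
  assumes "CARD('a) mod 3 = 1" "CARD('a) \<ge> 4"
  shows "\<exists>w::'a::{finite,field}. w^2 + w + 1 = 0"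
proof (rule ccontr)
  assume na: "\<not> ?thesis"
  let ?U = "UNIV - {0::'a}"
  have c1: "x^3 = 1 \<Longrightarrow> x = 1" for x :: 'a
  proof (rule ccontr)
    assume "x^3 = 1" "x \<noteq> 1"
    then have "(x - 1) * (x^2 + x + 1) = 0" by (simp add: algebra_simps power2_eq_square power3_eq_cube)
    then show False using na \<open>x \<noteq> 1\<close> by auto
  qed
  have inj: "inj_on (\<lambda>x. x^3) ?U"
  proof (rule inj_onI)
    fix x y assume "x \<in> ?U" "y \<in> ?U" "x^3 = (y::'a)^3"
    then have "(x/y)^3 = 1" by (simp add: power_divide)
    then have "x/y = 1" by (rule c1)
    then show "x = y" using \<open>y \<in> ?U\<close> by simp
  qed
  have img: "(\<lambda>x. x^3) ` ?U = ?U"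
    by (rule endo_inj_surj) (use inj in auto)
  define k where "k = (CARD('a) - 1) div 3"
  have k3: "CARD('a) - 1 = 3 * k" unfolding k_def using assms by presburger
  have kpos: "k \<ge> 1" using k3 assms by linarith
  have roots: "a^k = 1" if "a \<in> ?U" for a
  proof -
    have "a \<in> (\<lambda>x. x^3) ` ?U" using img that by simp
    then obtain b where b: "b \<in> ?U" "a = b^3" by blast
    have "a^k = b^(3*k)" by (simp add: b power_mult)
    also have "\<dots> = 1" using fermat[of b] b k3 by simp
    finally show ?thesis .
  qed
  let ?p = "monom (1::'a) k + [:-1:]"
  have deg: "degree ?p = k" using kpos by (subst degree_add_eq_left) (simp_all add: degree_monom_eq)
  have "?p \<noteq> 0" using deg kpos by auto
  then have "card {x. poly ?p x = 0} \<le> k" using card_poly_roots_bound deg by metis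
  moreover have "?U \<subseteq> {x. poly ?p x = 0}" using roots by (auto simp: poly_monom)
  then have "card ?U \<le> card {x. poly ?p x = 0}" by (intro card_mono) auto
  moreover have "card ?U = CARD('a) - 1" by (simp add: card_Diff_subset)
  ultimately show False using k3 kpos by linarith
qed

lemma quad3:
  fixes a b c :: "'a::field"
  assumes h: "\<And>y. y \<in> A \<Longrightarrow> a*y^2 + b*y + c = 0" and c3: "card A \<ge> 3"
  shows "a = 0 \<and> b = 0 \<and> c = 0"
proof -
  obtain B where B: "B \<subseteq> A" "card B = 3" using obtain_subset_with_card_n[OF c3] by blast
  then obtain x y z where xyz: "B = {x,y,z}" "x \<noteq> y" "y \<noteq> z" "x \<noteq> z" by (auto simp: card_3_iff)
  have hx: "a*x^2+b*x+c = 0" and hy: "a*y^2+b*y+c=0" and hz: "a*z^2+b*z+c=0"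
    using h B xyz by auto
  have "(x-y)*(a*(x+y)+b) = (a*x^2+b*x+c) - (a*y^2+b*y+c)" by (simp add: algebra_simps power2_eq_square)
  then have "(x-y)*(a*(x+y)+b) = 0" using hx hy by simp
  then have e1: "a*(x+y)+b = 0" using xyz by simp
  have "(x-z)*(a*(x+z)+b) = (a*x^2+b*x+c) - (a*z^2+b*z+c)" by (simp add: algebra_simps power2_eq_square)
  then have "(x-z)*(a*(x+z)+b) = 0" using hx hz by simp
  then have e2: "a*(x+z)+b = 0" using xyz by simp
  have "a*(y-z) = (a*(x+y)+b) - (a*(x+z)+b)" by (simp add: algebra_simps)
  then have "a*(y-z) = 0" using e1 e2 by simp
  then have a0: "a = 0" using xyz by simp
  then have "b = 0" using e1 by simp
  then show ?thesis using a0 hx by simp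
qed

lemma aff_None[simp]: "mobius a b 0 1 None = None"
  by (simp add: mobius_def)
lemma aff_Some[simp]: "mobius a b 0 1 (Some y) = Some (a*y+b)"
  by (simp add: mobius_def)
lemma fKri_None[simp]: "fKri K r i None = Some K" by (simp add: fKri_def)
lemma fKri_Some: "fKri K r i (Some y) = (if y = i then None else Some (K + r/(y-i)))"
  by (simp add: fKri_def)

lemma fKri_mob: "fKri K r i = mobius K (r - K*i) 1 (-i)"
proof
  fix x show "fKri K r i x = mobius K (r - K*i) 1 (-i) x"
  proof (cases x)
    case None then show ?thesis by (simp add: mobius_def)
  next
    case (Some y)
    show ?thesis
    proof (cases "y = i")
      case True then show ?thesis using Some by (simp add: mobius_def fKri_Some)
    next
      case False
      then have "y - i \<noteq> 0" by simp
      then have "(K*y + (r - K*i)) / (y - i) = K + r/(y-i)" by (simp add: field_simps)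
      then show ?thesis using Some False by (simp add: mobius_def fKri_Some)
    qed
  qed
qed

lemma fKri_PGL2: "r \<noteq> 0 \<Longrightarrow> fKri K r i \<in> PGL2"
  unfolding PGL2_def fKri_mob by (rule CollectI, rule exI[of _ K], rule exI[of _ "r - K*i"], rule exI[of _ 1], rule exI[of _ "-i"]) simp

lemma aff_PGL2: "a \<noteq> 0 \<Longrightarrow> mobius a b 0 1 \<in> PGL2"
  unfolding PGL2_def by (rule CollectI, rule exI[of _ a], rule exI[of _ b], rule exI[of _ 0], rule exI[of _ 1]) simp

lemma mob_c0: "d \<noteq> 0 \<Longrightarrow> mobius a b 0 d = mobius (a/d) (b/d) 0 1"
  by (auto simp: mobius_def fun_eq_iff add_divide_distrib split: option.split)

lemma mob_c: assumes "c \<noteq> 0"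
  shows "mobius a b c d = fKri (a/c) ((b*c - a*d)/c^2) (-d/c)"
proof
  fix x show "mobius a b c d x = fKri (a/c) ((b*c - a*d)/c^2) (-d/c) x"
  proof (cases x)
    case None then show ?thesis using assms by (simp add: mobius_def)
  next
    case (Some y)
    have iff: "c*y + d = 0 \<longleftrightarrow> y = -d/c" using assms by (auto simp: field_simps add_eq_0_iff)
    show ?thesis
    proof (cases "y = -d/c")
      case True then show ?thesis using Some iff by (simp add: mobius_def fKri_Some)
    next
      case False
      then have nz: "c*y+d \<noteq> 0" using iff by simp
      have e: "y - -d/c = (c*y+d)/c" using assms by (simp add: field_simps)
      have "((b*c - a*d)/c^2) / (y - -d/c) = ((b*c - a*d)/c^2) / ((c*y+d)/c)" by (simp only: e)
      also have "\<dots> = (b*c - a*d)/(c*(c*y+d))"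
        using assms nz by (simp add: power2_eq_square)
      finally have e2: "((b*c - a*d)/c^2) / (y - -d/c) = (b*c - a*d)/(c*(c*y+d))" .
      moreover have "a/c + (b*c - a*d)/(c*(c*y+d)) = (a*y+b)/(c*y+d)"
        using assms nz by (simp add: divide_simps) (simp add: algebra_simps)
      ultimately have "a/c + ((b*c - a*d)/c^2) / (y - -d/c) = (a*y+b)/(c*y+d)" by (simp only: e2)
      then show ?thesis using Some False nz by (simp add: mobius_def fKri_Some)
    qed
  qed
qed

lemma PGL2_cases:
  assumes "\<pi> \<in> PGL2"
  obtains (aff) a b where "a \<noteq> 0" "\<pi> = mobius a b 0 1"
    | (fk) K r i where "r \<noteq> 0" "\<pi> = fKri K r i"
proof -
  obtain a b c d where \<pi>: "\<pi> = mobius a b c d" and det: "a*d \<noteq> b*c"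
    using assms unfolding PGL2_def by blast
  show thesis
  proof (cases "c = 0")
    case True
    then have "d \<noteq> 0" "a \<noteq> 0" using det by auto
    then show thesis using aff[of "a/d" "b/d"] \<pi> True mob_c0 by auto
  next
    case False
    have "(b*c - a*d)/c^2 \<noteq> 0" using det False by auto
    then show thesis using fk \<pi> False mob_c by blast
  qed
qed

lemma tri_None[simp]: "tri \<pi> None = None" by (simp add: tri_def)
lemma tri_aff: "tri (mobius a b 0 1) (Some y) = Some (a*y+b)" by (simp add: tri_def)
lemma tri_f: "tri (fKri K r i) (Some y) = Some (if y = i then K else K + r/(y-i))"
  by (simp add: tri_def fKri_Some)

lemma fKri_inj: assumes "fKri K r i = fKri L s j" shows "K = L \<and> r = s \<and> i = j"
proof -
  have KL: "K = L" using fun_cong[OF assms, of None] by simp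
  have "fKri L s j (Some i) = None" using fun_cong[OF assms, of "Some i"] by (simp add: fKri_Some)
  then have ij: "i = j" by (simp add: fKri_Some split: if_splits)
  have "fKri K r i (Some (i+1)) = fKri L s j (Some (i+1))" using assms by simp
  then have "r = s" using KL ij by (simp add: fKri_Some)
  then show ?thesis using KL ij by simp
qed

lemma aff_inj: assumes "mobius a b 0 1 = mobius a' b' 0 (1::'a::field)" shows "a = a' \<and> b = b'"
proof -
  have "b = b'" using fun_cong[OF assms, of "Some 0"] by simp
  moreover have "a + b = a' + b'" using fun_cong[OF assms, of "Some 1"] by simp
  ultimately show ?thesis by simp
qed

lemma aff_ne_f: "mobius a b 0 1 \<noteq> fKri K r i"
proof
  assume "mobius a b 0 1 = fKri K r i"
  from fun_cong[OF this, of None] show False by simp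
qed

lemma hd_eq: "hd (tri \<pi>) (tri \<sigma>) = CARD('a::finite) - card {y::'a. tri \<pi> (Some y) = tri \<sigma> (Some y)}"
proof -
  have "{x. tri \<pi> x \<noteq> tri \<sigma> x} = Some ` {y. tri \<pi> (Some y) \<noteq> tri \<sigma> (Some y)}"
    by (auto, case_tac x, auto)
  then have "hd (tri \<pi>) (tri \<sigma>) = card {y. tri \<pi> (Some y) \<noteq> tri \<sigma> (Some y)}"
    unfolding hd_def by (simp add: card_image)
  also have "{y. tri \<pi> (Some y) \<noteq> tri \<sigma> (Some y)} = UNIV - {y. tri \<pi> (Some y) = tri \<sigma> (Some y)}" by auto
  finally show ?thesis by (simp add: card_Diff_subset)
qed

lemma adj_iff:
  assumes "CARD('a::{finite,field}) \<ge> 4"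
  shows "adjC (\<pi>::'a option \<Rightarrow> 'a option) \<sigma> \<longleftrightarrow> \<pi> \<in> PGL2 \<and> \<sigma> \<in> PGL2 \<and> \<pi> \<noteq> \<sigma> \<and>
     card {y. tri \<pi> (Some y) = tri \<sigma> (Some y)} = 4"
proof -
  have "card {y::'a. tri \<pi> (Some y) = tri \<sigma> (Some y)} \<le> CARD('a)" by (rule card_mono) auto
  then show ?thesis unfolding adjC_def hd_eq using assms by auto
qed

definition vF :: "'a::field \<Rightarrow> 'a \<Rightarrow> 'a \<Rightarrow> 'a \<Rightarrow> 'a" where
  "vF K r i y = (if y = i then K else K + r/(y-i))"

lemma tri_f': "tri (fKri K r i) (Some y) = Some (vF K r i y)"
  by (simp add: tri_f vF_def)

lemma card_ge_diff1: "finite A \<Longrightarrow> card (A - {i}) \<ge> card A - 1"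
  using diff_card_le_card_Diff[of "{i}" A] by simp

lemma ag_aff_aff:
  fixes a b a' b' :: "'a::{finite,field}"
  assumes "card {y. a*y+b = a'*y+b'} \<ge> 3" shows "a = a' \<and> b = b'"
proof -
  have "0 = (0::'a) \<and> a - a' = 0 \<and> b - b' = 0"
    by (rule quad3[OF _ assms]) (simp add: algebra_simps)
  then show ?thesis by simp
qed

lemma ag_aff_f:
  fixes a b K r i :: "'a::{finite,field}"
  assumes a: "a \<noteq> 0"
  shows "card {y. a*y+b = vF K r i y} \<noteq> 4"
proof
  let ?Ag = "{y. a*y+b = vF K r i y}"
  assume c4: "card ?Ag = 4"
  have c3: "card (?Ag - {i}) \<ge> 3" using card_ge_diff1[of ?Ag i] c4 by simp
  have "a = 0 \<and> (b - K - a*i) = 0 \<and> (K*i - b*i - r) = 0"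
  proof (rule quad3[OF _ c3])
    fix y assume y: "y \<in> ?Ag - {i}"
    then have yi: "y - i \<noteq> 0" by simp
    from y have "a*y+b = K + r/(y-i)" by (simp add: vF_def)
    then have "a*y+b-K = r/(y-i)" by simp
    then have "(a*y+b-K)*(y-i) = r" using yi by (simp add: field_simps)
    moreover have "a*y^2 + (b - K - a*i)*y + (K*i - b*i - r) = (a*y+b-K)*(y-i) - r"
      by (simp add: algebra_simps power2_eq_square)
    ultimately show "a*y^2 + (b - K - a*i)*y + (K*i - b*i - r) = 0" by simp
  qed
  then show False using a by simp
qed

lemma ag_f_f:
  fixes K L r s i j :: "'a::{finite,field}"
  assumes r: "r \<noteq> 0" and s: "s \<noteq> 0" and c4: "card {y. vF K r i y = vF L s j y} = 4"
    and ne: "\<not> (K = L \<and> r = s \<and> i = j)"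
  shows "r = s \<and> i \<noteq> j \<and> (K-L)*(i-j) = r"
proof -
  let ?Ag = "{y. vF K r i y = vF L s j y}"
  show ?thesis
  proof (cases "i = j")
    case True
    have c3: "card (?Ag - {i}) \<ge> 3" using card_ge_diff1[of ?Ag i] c4 by simp
    have "0 = (0::'a) \<and> K - L = 0 \<and> (r - s - (K-L)*i) = 0"
    proof (rule quad3[OF _ c3])
      fix y assume y: "y \<in> ?Ag - {i}"
      then have yi: "y - i \<noteq> 0" by simp
      from y True have "K + r/(y-i) = L + s/(y-i)" by (auto simp: vF_def)
      then have "(K + r/(y-i))*(y-i) = (L + s/(y-i))*(y-i)" by simp
      then have "K*(y-i) + r = L*(y-i) + s" using yi by (simp add: distrib_right)
      then show "0*y^2 + (K-L)*y + (r - s - (K-L)*i) = 0" by (simp add: algebra_simps)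
    qed
    note q = this
    note h1 = q[THEN conjunct2, THEN conjunct1]
    note h2 = q[THEN conjunct2, THEN conjunct2]
    from h1 have KL: "K = L" by (rule eq_iff_diff_eq_0[THEN iffD2])
    from h2 KL have "r - s = 0" by simp
    then have rs: "r = s" by (rule eq_iff_diff_eq_0[THEN iffD2])
    have False using ne unfolding KL rs True by simp
    then show ?thesis by (rule FalseE)
  next
    case False
    then have ij: "i - j \<noteq> 0" "j - i \<noteq> 0" by auto
    show ?thesis
    proof (cases "i \<in> ?Ag \<and> j \<in> ?Ag")
      case True
      then have e1: "K = L + s/(i-j)" and e2: "K + r/(j-i) = L" using False by (auto simp: vF_def)
      from e1 have "K - L = s/(i-j)" by simp
      then have f1: "(K-L)*(i-j) = s" using ij by (simp add: eq_divide_eq)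
      from e2 have "r/(j-i) = L - K" by (simp add: algebra_simps)
      then have "r = (L-K)*(j-i)" using ij by (simp add: divide_eq_eq)
      then have f2: "(K-L)*(i-j) = r" by (simp add: algebra_simps)
      show ?thesis using f1 f2 False by simp
    next
      case nb: False
      have c3: "card (?Ag - {i,j}) \<ge> 3"
      proof (cases "i \<in> ?Ag")
        case True
        then have "j \<notin> ?Ag" using nb by blast
        then have "?Ag - {i,j} = ?Ag - {i}" by blast
        then show ?thesis using card_ge_diff1[of ?Ag i] c4 by simp
      next
        case False
        then have "?Ag - {i,j} = ?Ag - {j}" by blast
        then show ?thesis using card_ge_diff1[of ?Ag j] c4 by simp
      qed
      have co: "K - L = 0 \<and> (r - s - (K-L)*(i+j)) = 0 \<and> ((K-L)*i*j - r*j + s*i) = 0"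
      proof (rule quad3[OF _ c3])
        fix y assume y: "y \<in> ?Ag - {i,j}"
        then have yi: "y - i \<noteq> 0" and yj: "y - j \<noteq> 0" by auto
        from y have "K + r/(y-i) = L + s/(y-j)" by (auto simp: vF_def)
        then have "(K + r/(y-i))*((y-i)*(y-j)) = (L + s/(y-j))*((y-i)*(y-j))" by simp
        then have "K*((y-i)*(y-j)) + r*(y-j) = L*((y-i)*(y-j)) + s*(y-i)"
          using yi yj by (simp add: distrib_right)
        then show "(K-L)*y^2 + (r - s - (K-L)*(i+j))*y + ((K-L)*i*j - r*j + s*i) = 0"
          by (simp add: algebra_simps power2_eq_square)
      qed
      then have "r = s" "K = L" by auto
      with co have "r*(i-j) = 0" by (simp add: algebra_simps)
      then show ?thesis using r ij by simp
    qed
  qed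
qed

lemma ring_id: "(y-j+w*(i-j))*(y-j+w^2*(i-j)) = (y-i)*(y-j) + (i-j)^2 + (i-j)*(y-j)*(w^2+w+1) + (i-j)^2*(w^3-1)"
  for y j w i :: "'a::comm_ring_1"
  by (simp add: algebra_simps power2_eq_square power3_eq_cube)

lemma frac_id:
  fixes K L i j y :: "'a::field"
  assumes "y - i \<noteq> 0" "y - j \<noteq> 0"
  shows "K + ((K-L)*(i-j))/(y-i) - (L + ((K-L)*(i-j))/(y-j)) = (K-L)*((y-i)*(y-j) + (i-j)^2)/((y-i)*(y-j))"
  using assms by (simp add: field_simps) (simp add: algebra_simps power2_eq_square)

lemma ag_edge:
  fixes w K L r i j :: "'a::field"
  assumes w: "w^2+w+1 = 0" and three: "(3::'a) \<noteq> 0" and ij: "i \<noteq> j"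
    and r: "(K-L)*(i-j) = r" and r0: "r \<noteq> 0"
  shows "{y. vF K r i y = vF L r j y} = {i, j, j - w*(i-j), j - w^2*(i-j)}"
proof -
  have D0: "K - L \<noteq> 0" using r r0 by auto
  have d0: "i - j \<noteq> 0" using ij by simp
  have w3: "w^3 = 1"
  proof -
    have "w^3 - 1 = (w-1)*(w^2+w+1)" by (simp add: algebra_simps power2_eq_square power3_eq_cube)
    then show ?thesis using w by simp
  qed
  have key: "vF K r i y = vF L r j y \<longleftrightarrow> y = j - w*(i-j) \<or> y = j - w^2*(i-j)"
    if yi: "y \<noteq> i" and yj: "y \<noteq> j" for y
  proof -
    have nz: "y - i \<noteq> 0" "y - j \<noteq> 0" "(y-i)*(y-j) \<noteq> 0" using yi yj by auto
    have "vF K r i y = vF L r j y \<longleftrightarrow> K + r/(y-i) - (L + r/(y-j)) = 0"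
      using yi yj by (simp add: vF_def)
    also have "\<dots> \<longleftrightarrow> (K-L)*((y-i)*(y-j) + (i-j)^2)/((y-i)*(y-j)) = 0"
      using frac_id[OF nz(1,2), of K L] r by simp
    also have "\<dots> \<longleftrightarrow> (y-i)*(y-j) + (i-j)^2 = 0" using D0 nz(3) by simp
    also have "\<dots> \<longleftrightarrow> (y-j+w*(i-j))*(y-j+w^2*(i-j)) = 0" using ring_id[of y j w i] w w3 by simp
    also have "\<dots> \<longleftrightarrow> y = j - w*(i-j) \<or> y = j - w^2*(i-j)"
    proof -
      have e1: "y-j+w*(i-j) = y - (j - w*(i-j))" and e2: "y-j+w^2*(i-j) = y - (j - w^2*(i-j))" by simp_all
      show ?thesis by (simp only: e1 e2 mult_eq_0_iff right_minus_eq)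
    qed
    finally show ?thesis .
  qed
  have vi: "vF K r i i = vF L r j i"
  proof -
    have "r/(i-j) = K - L" using r d0 by (auto simp: divide_eq_eq)
    then show ?thesis using ij by (simp add: vF_def)
  qed
  have vj: "vF K r i j = vF L r j j"
  proof -
    have ji: "j - i \<noteq> 0" using ij by simp
    have "r = (L - K)*(j-i)" using r by (simp add: algebra_simps)
    then have "r/(j-i) = L - K" using ji by simp
    then show ?thesis using ij by (simp add: vF_def)
  qed
  show ?thesis
  proof (rule set_eqI)
    fix y show "y \<in> {y. vF K r i y = vF L r j y} \<longleftrightarrow> y \<in> {i, j, j - w*(i-j), j - w^2*(i-j)}"
    proof (cases "y = i \<or> y = j")
      case True then show ?thesis using vi vj by auto
    next
      case False then show ?thesis using key[of y] by auto
    qed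
  qed
qed

lemma ag_edge_card:
  fixes w K L r i j :: "'a::field"
  assumes w: "w^2+w+1 = 0" and three: "(3::'a) \<noteq> 0" and ij: "i \<noteq> j"
    and r: "(K-L)*(i-j) = r" and r0: "r \<noteq> 0"
  shows "card {y. vF K r i y = vF L r j y} = 4"
proof -
  have d0: "i - j \<noteq> 0" using ij by simp
  have w0: "w \<noteq> 0" using w by auto
  have wm1: "w \<noteq> -1" using w by auto
  have w1: "w \<noteq> 1" using w three by auto
  have w20: "w^2 \<noteq> 0" using w0 by simp
  have w2m1: "w^2 \<noteq> -1"
  proof
    assume "w^2 = -1" then have "w = 0" using w by simp
    then show False using w0 by simp
  qed
  have ww: "w \<noteq> w^2"
  proof
    assume "w = w^2" then have "w*(w - 1) = 0" by (simp add: algebra_simps power2_eq_square)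
    then show False using w0 w1 by simp
  qed
  have n1: "j - w*(i-j) \<noteq> i"
  proof
    assume "j - w*(i-j) = i" then have "(w+1)*(i-j) = 0" by (simp add: algebra_simps)
    moreover have "w + 1 \<noteq> 0" using wm1 eq_neg_iff_add_eq_0 by blast
    ultimately show False using d0 by simp
  qed
  have n2: "j - w^2*(i-j) \<noteq> i"
  proof
    assume "j - w^2*(i-j) = i" then have "(w^2+1)*(i-j) = 0" by (simp add: algebra_simps)
    moreover have "w^2 + 1 \<noteq> 0" using w2m1 eq_neg_iff_add_eq_0 by blast
    ultimately show False using d0 by simp
  qed
  have n3: "j - w*(i-j) \<noteq> j" using w0 d0 by simp
  have n4: "j - w^2*(i-j) \<noteq> j" using w20 d0 by simp
  have n5: "j - w*(i-j) \<noteq> j - w^2*(i-j)" using ww d0 by simp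
  show ?thesis unfolding ag_edge[OF assms] using ij n1 n2 n3 n4 n5 by auto
qed

lemma Pset_iff: "\<pi> \<in> Pset r \<longleftrightarrow> (\<exists>a i. \<pi> = fKri a r i)"
  unfolding Pset_def by auto

lemma Ag_aff_aff: "{y. tri (mobius a b 0 1) (Some y) = tri (mobius a' b' 0 1) (Some y)} = {y. a*y+b = a'*y+b'}"
  by (simp add: tri_aff)
lemma Ag_aff_f: "{y. tri (mobius a b 0 1) (Some y) = tri (fKri K r i) (Some y)} = {y. a*y+b = vF K r i y}"
  by (simp add: tri_aff tri_f')
lemma Ag_f_aff: "{y. tri (fKri K r i) (Some y) = tri (mobius a b 0 1) (Some y)} = {y. a*y+b = vF K r i y}"
  by (auto simp add: tri_aff tri_f')
lemma Ag_f_f: "{y. tri (fKri K r i) (Some y) = tri (fKri L s j) (Some y)} = {y. vF K r i y = vF L s j y}"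
  by (simp add: tri_f')

lemma adj_cases:
  fixes \<pi> \<sigma> :: "'a::{finite,field} option \<Rightarrow> 'a option"
  assumes q4: "CARD('a) \<ge> 4" and adj: "adjC \<pi> \<sigma>"
  shows "\<exists>r K L i j. r \<noteq> 0 \<and> \<pi> = fKri K r i \<and> \<sigma> = fKri L r j \<and> i \<noteq> j \<and> (K-L)*(i-j) = r"
proof -
  have P: "\<pi> \<in> PGL2" "\<sigma> \<in> PGL2" and ne: "\<pi> \<noteq> \<sigma>"
    and c4: "card {y. tri \<pi> (Some y) = tri \<sigma> (Some y)} = 4"
    using adj adj_iff[OF q4] by blast+
  show ?thesis
  proof (rule PGL2_cases[OF P(1)])
    fix a b assume a0: "a \<noteq> 0" and hp: "\<pi> = mobius a b 0 1"
    show ?thesis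
    proof (rule PGL2_cases[OF P(2)])
      fix a' b' assume a0': "a' \<noteq> 0" and aff: "\<sigma> = mobius a' b' 0 1"
      have "card {y. a*y+b = a'*y+b'} = 4" using c4 unfolding hp aff Ag_aff_aff .
      then have "card {y. a*y+b = a'*y+b'} \<ge> 3" by simp
      then have "a = a' \<and> b = b'" by (rule ag_aff_aff)
      then show ?thesis using ne hp aff by simp
    next
      fix L s j assume s0: "s \<noteq> 0" and fk: "\<sigma> = fKri L s j"
      have "card {y. a*y+b = vF L s j y} = 4" using c4 unfolding hp fk Ag_aff_f .
      then show ?thesis using ag_aff_f a0 by blast
    qed
  next
    fix K r i assume r0: "r \<noteq> 0" and hp: "\<pi> = fKri K r i"
    show ?thesis
    proof (rule PGL2_cases[OF P(2)])
      fix a b assume a0: "a \<noteq> 0" and aff: "\<sigma> = mobius a b 0 1"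
      have "card {y. a*y+b = vF K r i y} = 4" using c4 unfolding hp aff Ag_f_aff .
      then show ?thesis using ag_aff_f a0 by blast
    next
      fix L s j assume s0: "s \<noteq> 0" and fk2: "\<sigma> = fKri L s j"
      have c: "card {y. vF K r i y = vF L s j y} = 4" using c4 unfolding hp fk2 Ag_f_f .
      have "\<not> (K = L \<and> r = s \<and> i = j)" using ne hp fk2 by auto
      then have "r = s \<and> i \<noteq> j \<and> (K-L)*(i-j) = r" using ag_f_f[OF r0 s0 c] by blast
      then show ?thesis using hp fk2 r0 by blast
    qed
  qed
qed

lemma edge_f:
  fixes K L r i j w :: "'a::{finite,field}"
  assumes q4: "CARD('a) \<ge> 4" and w: "w^2+w+1 = 0" and three: "(3::'a) \<noteq> 0"
    and r0: "r \<noteq> 0" and ij: "i \<noteq> j" and r: "(K-L)*(i-j) = r"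
  shows "adjC (fKri K r i) (fKri L r j)"
proof -
  have "fKri K r i \<noteq> fKri L r j" using fKri_inj ij by blast
  moreover have "card {y. tri (fKri K r i) (Some y) = tri (fKri L r j) (Some y)} = 4"
    unfolding Ag_f_f by (rule ag_edge_card[OF w three ij r r0])
  ultimately show ?thesis using adj_iff[OF q4] fKri_PGL2[OF r0] by blast
qed

lemma aff_isolated:
  fixes \<pi> \<sigma> :: "'a::{finite,field} option \<Rightarrow> 'a option"
  assumes q4: "CARD('a) \<ge> 4" and "\<pi> \<in> affine_maps"
  shows "\<not> adjC \<pi> \<sigma>"
proof
  assume "adjC \<pi> \<sigma>"
  then obtain K r i where "\<pi> = fKri K r i" using adj_cases[OF q4] by blast
  moreover obtain a b where "\<pi> = mobius a b 0 1" using assms(2) unfolding affine_maps_def by blast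
  ultimately show False using aff_ne_f by metis
qed

lemma Pset_PGL2: assumes r0: "r \<noteq> 0" shows "Pset r \<subseteq> PGL2"
proof
  fix \<pi> assume "\<pi> \<in> Pset r"
  then obtain a i where "\<pi> = fKri a r i" unfolding Pset_iff by blast
  then show "\<pi> \<in> PGL2" using fKri_PGL2[OF r0] by simp
qed

lemma Pset_disj: "\<pi> \<in> Pset r \<Longrightarrow> \<pi> \<in> Pset s \<Longrightarrow> r = s"
proof -
  assume "\<pi> \<in> Pset r" "\<pi> \<in> Pset s"
  then obtain a i b j where "\<pi> = fKri a r i" "\<pi> = fKri b s j" unfolding Pset_iff by blast
  then have "fKri a r i = fKri b s j" by simp
  then show "r = s" using fKri_inj by blast
qed

lemma step_E:
  fixes K r i d w :: "'a::{finite,field}"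
  assumes q4: "CARD('a) \<ge> 4" and w: "w^2+w+1 = 0" and three: "(3::'a) \<noteq> 0"
    and r0: "r \<noteq> 0" and d0: "d \<noteq> 0"
  shows "(fKri K r i, fKri (K + r/d) r (i+d)) \<in> induced_edges adjC (Pset r)"
proof -
  have "adjC (fKri K r i) (fKri (K + r/d) r (i+d))"
  proof (rule edge_f[OF q4 w three r0])
    show "i \<noteq> i + d" using d0 by simp
    show "(K - (K + r/d)) * (i - (i+d)) = r" using d0 by simp
  qed
  moreover have "fKri K r i \<in> Pset r" "fKri (K + r/d) r (i+d) \<in> Pset r" unfolding Pset_iff by blast+
  ultimately show ?thesis by (simp add: induced_edges_def)
qed

lemma horiz:
  fixes K r i x w :: "'a::{finite,field}"
  assumes q4: "CARD('a) \<ge> 4" and w: "w^2+w+1 = 0" and three: "(3::'a) \<noteq> 0" and two: "(2::'a) \<noteq> 0"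
    and r0: "r \<noteq> 0" and x0: "x \<noteq> 0"
  shows "(fKri K r i, fKri (K + x) r i) \<in> (induced_edges adjC (Pset r))\<^sup>*"
proof -
  define d where "d = 3*r/(2*x)"
  have d0: "d \<noteq> 0" using three two r0 x0 by (simp add: d_def)
  have d2: "-(2*d) \<noteq> 0" using d0 two by simp
  let ?E = "induced_edges adjC (Pset r)"
  have s1: "(fKri K r i, fKri (K + r/d) r (i+d)) \<in> ?E" by (rule step_E[OF q4 w three r0 d0])
  have s2: "(fKri (K + r/d) r (i+d), fKri (K + r/d + r/d) r (i+d+d)) \<in> ?E" by (rule step_E[OF q4 w three r0 d0])
  have s3: "(fKri (K + r/d + r/d) r (i+d+d), fKri (K + r/d + r/d + r/(-(2*d))) r (i+d+d+(-(2*d)))) \<in> ?E"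
    by (rule step_E[OF q4 w three r0 d2])
  have e1: "i+d+d+(-(2*d)) = i" by simp
  have e2: "K + r/d + r/d + r/(-(2*d)) = K + x"
  proof -
    have "r/d + r/d + r/(-(2*d)) = 3*r/(2*d)" using d0 two by (simp add: field_simps)
    also have "\<dots> = x"
    proof -
      have "(2::'a)*3 \<noteq> 0" using two three by (rule no_zero_divisors)
      then have "(6::'a) \<noteq> 0" by simp
      then show ?thesis using three two r0 x0 by (simp add: d_def field_simps)
    qed
    finally show ?thesis by simp
  qed
  from s1 have "(fKri K r i, fKri (K + r/d) r (i+d)) \<in> ?E\<^sup>*" by (rule r_into_rtrancl)
  then have "(fKri K r i, fKri (K + r/d + r/d) r (i+d+d)) \<in> ?E\<^sup>*" using s2 by (rule rtrancl_into_rtrancl)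
  then have "(fKri K r i, fKri (K + r/d + r/d + r/(-(2*d))) r (i+d+d+(-(2*d)))) \<in> ?E\<^sup>*" using s3 by (rule rtrancl_into_rtrancl)
  then show ?thesis unfolding e1 e2 .
qed

lemma conn:
  fixes r w :: "'a::{finite,field}"
  assumes q4: "CARD('a) \<ge> 4" and w: "w^2+w+1 = 0" and three: "(3::'a) \<noteq> 0" and two: "(2::'a) \<noteq> 0"
    and r0: "r \<noteq> 0"
  shows "(fKri K r i, fKri L r j) \<in> (induced_edges adjC (Pset r))\<^sup>*"
proof -
  let ?E = "induced_edges adjC (Pset r)"
  have h: "(fKri M r l, fKri L r l) \<in> ?E\<^sup>*" for M l
  proof (cases "M = L")
    case True then show ?thesis by simp
  next
    case False
    then have "L - M \<noteq> 0" by simp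
    from horiz[OF q4 w three two r0 this, of M l] show ?thesis by simp
  qed
  show ?thesis
  proof (cases "i = j")
    case True then show ?thesis using h by simp
  next
    case False
    then have d0: "j - i \<noteq> 0" by simp
    have "(fKri K r i, fKri (K + r/(j-i)) r (i + (j-i))) \<in> ?E" by (rule step_E[OF q4 w three r0 d0])
    then have "(fKri K r i, fKri (K + r/(j-i)) r j) \<in> ?E" by simp
    then show ?thesis using h[of "K + r/(j-i)" j] by (rule converse_rtrancl_into_rtrancl)
  qed
qed

theorem theorem14:
  fixes dummy :: "'a::{finite,field}"
  assumes "\<exists>p m. prime (p::nat) \<and> odd p \<and> m \<ge> 1 \<and> CARD('a) = p ^ m"
    and "CARD('a) mod 3 = 1"
    and "CARD('a) \<ge> 13"
  shows "components (adjC :: ('a option \<Rightarrow> 'a option) \<Rightarrow> _) PGL2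
           = {{\<pi>} | \<pi>. \<pi> \<in> (affine_maps :: ('a option \<Rightarrow> 'a option) set)}
             \<union> {Pset r | r::'a. r \<noteq> 0}
    \<and> (affine_maps :: ('a option \<Rightarrow> 'a option) set) = {\<pi> \<in> PGL2. \<pi> None = None}
    \<and> card (affine_maps :: ('a option \<Rightarrow> 'a option) set) = CARD('a) * (CARD('a) - 1)
    \<and> (\<forall>\<pi> \<in> (affine_maps :: ('a option \<Rightarrow> 'a option) set). \<forall>\<sigma>. \<not> adjC \<pi> \<sigma>)
    \<and> card {Pset r | r::'a. r \<noteq> 0} = CARD('a) - 1
    \<and> (\<forall>r::'a. r \<noteq> 0 \<longrightarrow> connected_graph adjC (Pset r))"
proof -
  have q4: "CARD('a) \<ge> 4" using assms(3) by simp
  have oddq: "odd CARD('a)" using assms(1) by auto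
  have two: "(2::'a) \<noteq> 0" by (rule two_ne0[OF oddq])
  have three: "(3::'a) \<noteq> 0" by (rule three_ne0[OF assms(2)])
  obtain w :: 'a where w: "w^2+w+1 = 0" using omega_ex[OF assms(2) q4] by blast
  have AFF: "(affine_maps :: ('a option \<Rightarrow> 'a option) set) = {\<pi> \<in> PGL2. \<pi> None = None}"
  proof (intro set_eqI iffI)
    fix \<pi> :: "'a option \<Rightarrow> 'a option" assume "\<pi> \<in> affine_maps"
    then obtain a b where "a \<noteq> 0" "\<pi> = mobius a b 0 1" unfolding affine_maps_def by blast
    then show "\<pi> \<in> {\<pi> \<in> PGL2. \<pi> None = None}" using aff_PGL2 by simp
  next
    fix \<pi> :: "'a option \<Rightarrow> 'a option" assume h: "\<pi> \<in> {\<pi> \<in> PGL2. \<pi> None = None}"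
    then have P: "\<pi> \<in> PGL2" and N: "\<pi> None = None" by auto
    show "\<pi> \<in> affine_maps"
    proof (rule PGL2_cases[OF P])
      fix a b assume "a \<noteq> (0::'a)" "\<pi> = mobius a b 0 1"
      then show ?thesis unfolding affine_maps_def by blast
    next
      fix K r i :: 'a assume "\<pi> = fKri K r i"
      then show ?thesis using N by simp
    qed
  qed
  have CA: "card (affine_maps :: ('a option \<Rightarrow> 'a option) set) = CARD('a) * (CARD('a) - 1)"
  proof -
    have e: "(affine_maps :: ('a option \<Rightarrow> 'a option) set) = (\<lambda>(a,b). mobius a b 0 1) ` ((UNIV - {0::'a}) \<times> (UNIV::'a set))"
      unfolding affine_maps_def by auto
    have inj: "inj_on (\<lambda>(a,b). mobius a b 0 (1::'a)) ((UNIV - {0::'a}) \<times> (UNIV::'a set))"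
      by (rule inj_onI) (auto dest: aff_inj)
    have "card (affine_maps :: ('a option \<Rightarrow> 'a option) set) = card (UNIV - {0::'a}) * CARD('a)"
      unfolding e card_image[OF inj] card_cartesian_product ..
    also have "card (UNIV - {0::'a}) = CARD('a) - 1" by (simp add: card_Diff_subset)
    finally show ?thesis by simp
  qed
  have ISO: "\<forall>\<pi> \<in> (affine_maps :: ('a option \<Rightarrow> 'a option) set). \<forall>\<sigma>. \<not> adjC \<pi> \<sigma>"
    using aff_isolated[OF q4] by blast
  have CP: "card {Pset r | r::'a. r \<noteq> 0} = CARD('a) - 1"
  proof -
    have e: "{Pset r | r::'a. r \<noteq> 0} = Pset ` (UNIV - {0})" by auto
    have inj: "inj_on (Pset :: 'a \<Rightarrow> _) (UNIV - {0})"
    proof (rule inj_onI)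
      fix r s :: 'a assume "Pset r = Pset s"
      moreover have "fKri 0 r 0 \<in> Pset r" unfolding Pset_iff by blast
      ultimately have "fKri 0 r 0 \<in> Pset s" by simp
      then show "r = s" using Pset_disj \<open>fKri 0 r 0 \<in> Pset r\<close> by blast
    qed
    show ?thesis unfolding e card_image[OF inj] by (simp add: card_Diff_subset)
  qed
  have CONN: "\<forall>r::'a. r \<noteq> 0 \<longrightarrow> connected_graph adjC (Pset r)"
  proof (intro allI impI)
    fix r :: 'a assume r0: "r \<noteq> 0"
    have ne: "Pset r \<noteq> {}" using Pset_iff by blast
    have "\<forall>u\<in>Pset r. \<forall>v\<in>Pset r. (u, v) \<in> (induced_edges adjC (Pset r))\<^sup>*"
    proof (intro ballI)
      fix u v assume "u \<in> Pset r" "v \<in> Pset r"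
      then obtain K i L j where "u = fKri K r i" "v = fKri L r j" unfolding Pset_iff by blast
      then show "(u, v) \<in> (induced_edges adjC (Pset r))\<^sup>*" using conn[OF q4 w three two r0] by simp
    qed
    then show "connected_graph adjC (Pset r)" unfolding connected_graph_def using ne by blast
  qed
  let ?R = "induced_edges (adjC :: ('a option \<Rightarrow> 'a option) \<Rightarrow> _) PGL2"
  have reach_aff: "w' = \<pi>" if h: "(\<pi>, w') \<in> ?R\<^sup>*" and a: "\<pi> \<in> affine_maps" for \<pi> w'
    using h
  proof (induction rule: rtrancl_induct)
    case base then show ?case by simp
  next
    case (step y z)
    then have "adjC \<pi> z" unfolding induced_edges_def by simp
    then show ?case using ISO a by blast
  qed
  have reach_P: "w' \<in> Pset r" if h: "(u, w') \<in> ?R\<^sup>*" and u: "u \<in> Pset r" for u w' r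
    using h
  proof (induction rule: rtrancl_induct)
    case base then show ?case using u by simp
  next
    case (step y z)
    then have "adjC y z" unfolding induced_edges_def by simp
    then obtain s K L i j where s: "s \<noteq> 0" "y = fKri K s i" "z = fKri L s j"
      using adj_cases[OF q4] by blast
    then have "y \<in> Pset s" unfolding Pset_iff by blast
    then have "s = r" using Pset_disj step.IH by blast
    then show ?case using s unfolding Pset_iff by blast
  qed
  have cls_aff: "{w' \<in> PGL2. (v, w') \<in> ?R\<^sup>*} = {v}" if v: "v \<in> affine_maps" for v
    using reach_aff[OF _ v] v AFF by auto
  have cls_P: "{w' \<in> PGL2. (v, w') \<in> ?R\<^sup>*} = Pset r" if v: "v \<in> Pset r" and r0: "r \<noteq> 0" for v r
  proof (intro set_eqI iffI)
    fix x assume "x \<in> {w' \<in> PGL2. (v, w') \<in> ?R\<^sup>*}"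
    then show "x \<in> Pset r" using reach_P[OF _ v] by blast
  next
    fix x assume x: "x \<in> Pset r"
    have sub: "induced_edges adjC (Pset r) \<subseteq> ?R"
      using Pset_PGL2[OF r0] unfolding induced_edges_def by blast
    have "(v, x) \<in> (induced_edges adjC (Pset r))\<^sup>*"
      using CONN r0 v x unfolding connected_graph_def by blast
    then have "(v, x) \<in> ?R\<^sup>*" using rtrancl_mono[OF sub] by blast
    then show "x \<in> {w' \<in> PGL2. (v, w') \<in> ?R\<^sup>*}" using x Pset_PGL2[OF r0] by blast
  qed
  have COMP: "components (adjC :: ('a option \<Rightarrow> 'a option) \<Rightarrow> _) PGL2
           = {{\<pi>} | \<pi>. \<pi> \<in> (affine_maps :: ('a option \<Rightarrow> 'a option) set)}
             \<union> {Pset r | r::'a. r \<noteq> 0}"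
  proof (intro set_eqI iffI)
    fix C assume "C \<in> components (adjC :: ('a option \<Rightarrow> 'a option) \<Rightarrow> _) PGL2"
    then obtain v where v: "v \<in> PGL2" and C: "C = {w' \<in> PGL2. (v, w') \<in> ?R\<^sup>*}"
      unfolding components_def by blast
    show "C \<in> {{\<pi>} | \<pi>. \<pi> \<in> (affine_maps :: ('a option \<Rightarrow> 'a option) set)} \<union> {Pset r | r::'a. r \<noteq> 0}"
    proof (rule PGL2_cases[OF v])
      fix a b :: 'a assume "a \<noteq> 0" "v = mobius a b 0 1"
      then have va: "v \<in> affine_maps" unfolding affine_maps_def by blast
      then show ?thesis using cls_aff[OF va] C by blast
    next
      fix K r i :: 'a assume "r \<noteq> 0" "v = fKri K r i"
      then have "v \<in> Pset r" unfolding Pset_iff by blast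
      then show ?thesis using cls_P[OF _ \<open>r \<noteq> 0\<close>] C \<open>r \<noteq> 0\<close> by blast
    qed
  next
    fix C assume "C \<in> {{\<pi>} | \<pi>. \<pi> \<in> (affine_maps :: ('a option \<Rightarrow> 'a option) set)} \<union> {Pset r | r::'a. r \<noteq> 0}"
    then show "C \<in> components (adjC :: ('a option \<Rightarrow> 'a option) \<Rightarrow> _) PGL2"
    proof
      assume "C \<in> {{\<pi>} | \<pi>. \<pi> \<in> (affine_maps :: ('a option \<Rightarrow> 'a option) set)}"
      then obtain v where v: "v \<in> affine_maps" and C: "C = {v}" by blast
      have "v \<in> PGL2" using v AFF by blast
      then show ?thesis unfolding components_def using cls_aff[OF v] C by blast
    next
      assume "C \<in> {Pset r | r::'a. r \<noteq> 0}"
      then obtain r :: 'a where r0: "r \<noteq> 0" and C: "C = Pset r" by blast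
      have v: "fKri 0 r 0 \<in> Pset r" unfolding Pset_iff by blast
      then have "fKri 0 r 0 \<in> PGL2" using Pset_PGL2[OF r0] by blast
      then show ?thesis unfolding components_def using cls_P[OF v r0] C by blast
    qed
  qed
  show ?thesis using COMP AFF CA ISO CP CONN by blast
qed

end
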